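(* Assume $(\boldsymbol\Sigma,\sigma)$ is a primitive Markov subshift on a countable alphabet, with associated set $\mathbb F$. Let $A:\boldsymbol\Sigma\to\mathbb R$ be a bounded above and locally H\"older continuous potential such that $\inf A|_{\bigcup_{i\in\mathbb F}[i]}>-\infty$. Then there exists a unique minimal, nonnegative, bounded and locally H\"older continuous function $u_A:\boldsymbol\Sigma\to\mathbb R_+$ satisfying $$A+u_A-u_A\circ\sigma\le\beta_A ,$$ where minimality means: for every nonnegative continuous sub-action $u:\boldsymbol\Sigma\to\mathbb R_+$ (not necessarily locally H\"older continuous) one has $u_A\le u$.
   Context: Let $\mathbf M:\mathbb Z_+\times\mathbb Z_+\to\{0,1\}$ be a transition matrix. Put $\mathcal B_0=\{i:\mathbf M(i,j)=1\text{ for some }j\}$, $\mathcal B_n=\{i:\mathbf M(i,j)=1\text{ for some }j\in\mathcal B_{n-1}\}$. $\mathbf M$ is primitive if there exist $\mathbb F\subseteq\mathbb Z_+$ and an integer $K_0\ge0$ such that for all $i,j\in\bigcap_{n\ge0}\mathcal B_n$ there are $\ell_1,\dots,\ell_{K_0}\in\mathbb F$ with $\mathbf M(i,\ell_1)\mathbf M(\ell_1,\ell_2)\cdots\mathbf M(\ell_{K_0},j)=1$. $\boldsymbol\Sigma=\{\mathbf x\in\mathbb Z_+^{\mathbb Z_+}:\mathbf M(x_j,x_{j+1})=1\ \forall j\}$ with metric $d(\mathbf x,\mathbf y)=\lambda^{\min\{j:x_j\neq y_j\}}$, $\lambda\in(0,1)$ fixed; $\sigma$ the left shift; $[i]=\{\mathbf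 x:x_0=i\}$. $\mathcal M_\sigma$ = $\sigma$-invariant Borel probabilities; $\beta_A=\sup_{\mu\in\mathcal M_\sigma}\int A\,d\mu$. $\mathrm{Var}_k(A)=\sup\{A(\mathbf x)-A(\mathbf y):d(\mathbf x,\mathbf y)\le\lambda^k\}$; $A$ is locally H\"older continuous if there is $H_A>0$ with $\mathrm{Var}_k(A)\le H_A\lambda^k$ for all $k\ge1$. A sub-action for $A$ is a continuous $u:\boldsymbol\Sigma\to\mathbb R$ with $A+u-u\circ\sigma\le\beta_A$ everywhere. *)

theory Defs
  imports "HOL-Probability.Probability"
begin

text \<open>Alphabet Z_+ is modelled by nat; a transition matrix by a boolean relation
  M i j (true iff the matrix entry is 1).\<close>

type_synonym seq = "nat \<Rightarrow> nat"

definition Bset :: "(nat \<Rightarrow> nat \<Rightarrow> bool) \<Rightarrow> nat \<Rightarrow> nat set" where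
  "Bset M n = ((\<lambda>B. {i. \<exists>j\<in>B. M i j}) ^^ n) {i. \<exists>j. M i j}"

definition primitive_with :: "(nat \<Rightarrow> nat \<Rightarrow> bool) \<Rightarrow> nat set \<Rightarrow> bool" where
  "primitive_with M F \<longleftrightarrow> (\<exists>K0::nat. \<forall>i\<in>(\<Inter>n. Bset M n). \<forall>j\<in>(\<Inter>n. Bset M n).
     \<exists>l::nat \<Rightarrow> nat. l 0 = i \<and> l (Suc K0) = j \<and> (\<forall>t\<in>{1..K0}. l t \<in> F)
        \<and> (\<forall>t\<le>K0. M (l t) (l (Suc t))))"

definition SigmaM :: "(nat \<Rightarrow> nat \<Rightarrow> bool) \<Rightarrow> seq set" where
  "SigmaM M = {x. \<forall>j. M (x j) (x (Suc j))}"

definition shift :: "seq \<Rightarrow> seq" where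
  "shift x = (\<lambda>j. x (Suc j))"

definition cyl :: "seq set \<Rightarrow> nat \<Rightarrow> seq set" where
  "cyl S i = {x\<in>S. x 0 = i}"

definition dsh :: "real \<Rightarrow> seq \<Rightarrow> seq \<Rightarrow> real" where
  "dsh lam x y = (if x = y then 0 else lam ^ (LEAST j. x j \<noteq> y j))"

text \<open>Borel sigma-algebra of (Sigma, d): generated by the cylinder sets.\<close>
definition SigmaAlg :: "seq set \<Rightarrow> seq measure" where
  "SigmaAlg S = sigma S {{x\<in>S. x j = a} | j a. True}"

definition invariant_probs :: "seq set \<Rightarrow> seq measure set" where
  "invariant_probs S = {\<mu>. sets \<mu> = sets (SigmaAlg S) \<and> space \<mu> = S \<and> prob_space \<mu>
      \<and> shift \<in> measurable \<mu> \<mu> \<and> distr \<mu> \<mu> shift = \<mu>}"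

text \<open>Extended-real valued integral (may be -infinity for functions bounded above).\<close>
definition eint :: "seq measure \<Rightarrow> (seq \<Rightarrow> real) \<Rightarrow> ereal" where
  "eint \<mu> f = enn2ereal (\<integral>\<^sup>+ x. ennreal (f x) \<partial>\<mu>) - enn2ereal (\<integral>\<^sup>+ x. ennreal (- f x) \<partial>\<mu>)"

definition betaA :: "seq set \<Rightarrow> (seq \<Rightarrow> real) \<Rightarrow> ereal" where
  "betaA S A = (SUP \<mu>\<in>invariant_probs S. eint \<mu> A)"

definition cont_d :: "real \<Rightarrow> seq set \<Rightarrow> (seq \<Rightarrow> real) \<Rightarrow> bool" where
  "cont_d lam S u \<longleftrightarrow> (\<forall>x\<in>S. \<forall>e>0. \<exists>\<delta>>0. \<forall>y\<in>S. dsh lam x y < \<delta> \<longrightarrow> \<bar>u x - u y\<bar> < e)"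

definition loc_holder :: "real \<Rightarrow> seq set \<Rightarrow> (seq \<Rightarrow> real) \<Rightarrow> bool" where
  "loc_holder lam S A \<longleftrightarrow> (\<exists>H>0. \<forall>k\<ge>1. \<forall>x\<in>S. \<forall>y\<in>S.
      dsh lam x y \<le> lam ^ k \<longrightarrow> A x - A y \<le> H * lam ^ k)"

definition sub_action :: "real \<Rightarrow> seq set \<Rightarrow> (seq \<Rightarrow> real) \<Rightarrow> (seq \<Rightarrow> real) \<Rightarrow> bool" where
  "sub_action lam S A u \<longleftrightarrow> cont_d lam S u \<and>
      (\<forall>x\<in>S. ereal (A x + u x - u (shift x)) \<le> betaA S A)"

end

theory Submission
  imports Defs
begin



lemma funpow_shift: "(shift ^^ n) x = (\<lambda>j. x (n + j))"
  by (induction n arbitrary: x) (auto simp: shift_def)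

lemma shift_in: "x \<in> SigmaM M \<Longrightarrow> shift x \<in> SigmaM M"
  by (auto simp: SigmaM_def shift_def)

lemma funpow_shift_in: "x \<in> SigmaM M \<Longrightarrow> (shift ^^ n) x \<in> SigmaM M"
  by (induction n) (auto simp: shift_in)

definition Gen :: "seq set \<Rightarrow> seq set set" where
  "Gen S = {{x\<in>S. x j = a} | j a. True}"

lemma Gen_Pow: "Gen S \<subseteq> Pow S" by (auto simp: Gen_def)

lemma space_SigmaAlg[simp]: "space (SigmaAlg S) = S"
  unfolding SigmaAlg_def using Gen_Pow[of S] unfolding Gen_def by (simp add: space_measure_of)

lemma cyl_sets: "{x\<in>S. x j = a} \<in> sets (SigmaAlg S)"
proof -
  have "{x\<in>S. x j = a} \<in> {{x\<in>S. x j = a} | j a. True}" by blast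
  then show ?thesis unfolding SigmaAlg_def
    by (metis (no_types, lifting) Gen_Pow Gen_def sets.sigma_sets_eq sets_measure_of sigma_sets.Basic)
qed

lemma singleton_sets: assumes "q \<in> S" shows "{q} \<in> sets (SigmaAlg S)"
proof -
  have "{q} = (\<Inter>j\<in>(UNIV::nat set). {x\<in>S. x j = q j})" using assms by auto
  moreover have "(\<Inter>j\<in>(UNIV::nat set). {x\<in>S. x j = q j}) \<in> sets (SigmaAlg S)"
    by (rule sets.countable_INT) (auto simp: cyl_sets)
  ultimately show ?thesis by simp
qed

lemma shift_meas: "shift \<in> SigmaAlg (SigmaM M) \<rightarrow>\<^sub>M SigmaAlg (SigmaM M)"
proof -
  have "shift \<in> SigmaAlg (SigmaM M) \<rightarrow>\<^sub>M measure_of (SigmaM M) (Gen (SigmaM M)) (\<lambda>x. 0)"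
  proof (rule measurable_measure_of)
    show "Gen (SigmaM M) \<subseteq> Pow (SigmaM M)" by (rule Gen_Pow)
    show "shift \<in> space (SigmaAlg (SigmaM M)) \<rightarrow> SigmaM M" by (auto simp: shift_in)
    fix y assume "y \<in> Gen (SigmaM M)"
    then obtain j a where y: "y = {x\<in>SigmaM M. x j = a}" by (auto simp: Gen_def)
    have "shift -` y \<inter> space (SigmaAlg (SigmaM M)) = {x\<in>SigmaM M. x (Suc j) = a}"
      using y by (auto simp: shift_def shift_in[unfolded shift_def])
    then show "shift -` y \<inter> space (SigmaAlg (SigmaM M)) \<in> sets (SigmaAlg (SigmaM M))"
      by (simp add: cyl_sets)
  qed
  then show ?thesis by (simp add: SigmaAlg_def Gen_def)
qed




lemma per_mod:
  assumes "(shift ^^ N) p = p"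
  shows "(shift ^^ (k mod N)) p = (shift ^^ k) p"
proof -
  have pN: "p (N + j) = p j" for j using fun_cong[OF assms, of j] by (simp add: funpow_shift)
  have "p (j + m * N) = p j" for j m
  proof (induction m)
    case (Suc m)
    then show ?case using pN[of "j + m * N"] by (simp add: algebra_simps)
  qed simp
  then have "p (k mod N + j) = p (k + j)" for j
    by (metis add.commute add.left_commute mod_div_mult_eq mult.commute)
  then show ?thesis by (simp add: funpow_shift)
qed

lemma ennsum_aux:
  fixes a :: "nat \<Rightarrow> real" assumes "N > 0"
  shows "(\<Sum>i<N. ennreal (1 / real N) * ennreal (a i)) = ennreal ((\<Sum>i<N. max (a i) 0) / real N)"
proof -
  have "(\<Sum>i<N. ennreal (1 / real N) * ennreal (a i)) = (\<Sum>i<N. ennreal (max (a i) 0 / real N))"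
    by (intro sum.cong refl) (metis ennreal_max_0' ennreal_mult'' max.cobounded2 mult.commute times_divide_eq_right mult_1)
  also have "\<dots> = ennreal (\<Sum>i<N. max (a i) 0 / real N)"
    by (rule sum_ennreal) simp
  also have "\<dots> = ennreal ((\<Sum>i<N. max (a i) 0) / real N)"
    by (simp add: sum_divide_distrib)
  finally show ?thesis .
qed

lemma card_rot:
  fixes f :: "nat \<Rightarrow> 'a"
  assumes N: "N > 0" and fmod: "\<And>k. f (k mod N) = f k"
  shows "card ((\<lambda>i. f (Suc i)) -` X \<inter> {..<N}) = card (f -` X \<inter> {..<N})"
proof -
  let ?g = "\<lambda>i. Suc i mod N"
  have inj: "inj_on ?g {..<N}"
  proof (rule inj_onI)
    fix x y assume xy: "x \<in> {..<N}" "y \<in> {..<N}" "Suc x mod N = Suc y mod N"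
    then show "x = y" by (auto simp: mod_Suc split: if_splits)
  qed
  have "?g ` ((\<lambda>i. f (Suc i)) -` X \<inter> {..<N}) = f -` X \<inter> {..<N}"
  proof
    show "?g ` ((\<lambda>i. f (Suc i)) -` X \<inter> {..<N}) \<subseteq> f -` X \<inter> {..<N}"
    proof
      fix y assume "y \<in> ?g ` ((\<lambda>i. f (Suc i)) -` X \<inter> {..<N})"
      then obtain i where "y = Suc i mod N" "f (Suc i) \<in> X" by auto
      then show "y \<in> f -` X \<inter> {..<N}" using N fmod[of "Suc i"] by simp
    qed
    show "f -` X \<inter> {..<N} \<subseteq> ?g ` ((\<lambda>i. f (Suc i)) -` X \<inter> {..<N})"
    proof
      fix i assume i: "i \<in> f -` X \<inter> {..<N}"
      define i' where "i' = (i + N - 1) mod N"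
      have e: "Suc i' mod N = i"
      proof (cases i)
        case 0
        then show ?thesis using N by (simp add: i'_def)
      next
        case (Suc k)
        then have "i' = k" using i by (simp add: i'_def)
        then show ?thesis using Suc i by simp
      qed
      moreover have "i' < N" using N by (simp add: i'_def)
      moreover have "f (Suc i') \<in> X" using i fmod[of "Suc i'"] e by auto
      ultimately show "i \<in> ?g ` ((\<lambda>i. f (Suc i)) -` X \<inter> {..<N})" by force
    qed
  qed
  moreover have "inj_on ?g ((\<lambda>i. f (Suc i)) -` X \<inter> {..<N})" using inj by (rule inj_on_subset) auto
  ultimately show ?thesis using card_image by metis
qed

lemma periodic_measure:
  fixes A :: "seq \<Rightarrow> real"
  assumes p: "p \<in> SigmaM M" and N: "N > 0" and per: "(shift ^^ N) p = p"
  shows "ereal ((\<Sum>i<N. A ((shift ^^ i) p)) / real N) \<le> betaA (SigmaM M) A"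
proof -
  define S where "S = SigmaM M"
  define f where "f = (\<lambda>i. (shift ^^ i) p)"
  define U where "U = uniform_count_measure {..<N::nat}"
  define \<Sigma> where "\<Sigma> = SigmaAlg S"
  define \<mu> where "\<mu> = distr U \<Sigma> f"
  have fS: "f i \<in> S" for i using p by (simp add: f_def S_def funpow_shift_in)
  have fSuc: "shift (f i) = f (Suc i)" for i by (simp add: f_def)
  have fmod: "f (k mod N) = f k" for k using per_mod[OF per] by (simp add: f_def)
  have spU: "space U = {..<N}" unfolding U_def using sets_eq_imp_space_eq[OF sets_uniform_count_measure_count_space] by simp
  have fin: "finite {..<N}" "{..<N} \<noteq> {}" using N by auto
  have f_meas: "f \<in> U \<rightarrow>\<^sub>M \<Sigma>"
    unfolding U_def measurable_cong_sets[OF sets_uniform_count_measure_count_space refl]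
    using fS by (simp add: measurable_count_space_eq1 \<Sigma>_def)
  have sh_meas: "shift \<in> \<Sigma> \<rightarrow>\<^sub>M \<Sigma>" using shift_meas by (simp add: \<Sigma>_def S_def)
  have sets_mu: "sets \<mu> = sets \<Sigma>" by (simp add: \<mu>_def)
  have space_mu: "space \<mu> = S" by (simp add: \<mu>_def \<Sigma>_def)
  have prob: "prob_space \<mu>"
    unfolding \<mu>_def by (rule prob_space.prob_space_distr[OF _ f_meas]) (simp add: U_def prob_space_uniform_count_measure fin)
  have sh_mu: "shift \<in> \<mu> \<rightarrow>\<^sub>M \<mu>"
    using sh_meas by (simp add: measurable_cong_sets[OF sets_mu sets_mu])
  have card_eq: "card ((\<lambda>i. f (Suc i)) -` X \<inter> {..<N}) = card (f -` X \<inter> {..<N})" for X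
    by (rule card_rot[of N f, OF N fmod])
  have inv: "distr \<mu> \<mu> shift = \<mu>"
  proof -
    have "distr \<mu> \<mu> shift = distr \<mu> \<Sigma> shift"
      by (rule distr_cong) (simp_all add: sets_mu)
    also have "\<dots> = distr U \<Sigma> (shift \<circ> f)"
      unfolding \<mu>_def by (rule distr_distr[OF sh_meas f_meas])
    also have "\<dots> = distr U \<Sigma> f"
    proof (rule measure_eqI)
      show "sets (distr U \<Sigma> (shift \<circ> f)) = sets (distr U \<Sigma> f)" by simp
      fix X assume "X \<in> sets (distr U \<Sigma> (shift \<circ> f))"
      then have X: "X \<in> sets \<Sigma>" by simp
      have m2: "shift \<circ> f \<in> U \<rightarrow>\<^sub>M \<Sigma>" using sh_meas f_meas by (rule measurable_comp[rotated])
      have "(shift \<circ> f) = (\<lambda>i. f (Suc i))" using fSuc by auto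
      then show "emeasure (distr U \<Sigma> (shift \<circ> f)) X = emeasure (distr U \<Sigma> f) X"
      proof -
        have "emeasure (distr U \<Sigma> (shift \<circ> f)) X = emeasure U ((\<lambda>i. f (Suc i)) -` X \<inter> {..<N})"
          using emeasure_distr[OF m2 X] \<open>shift \<circ> f = _\<close> spU by simp
        also have "\<dots> = emeasure U (f -` X \<inter> {..<N})"
          unfolding U_def using card_eq[of X] fin by (simp add: emeasure_uniform_count_measure)
        also have "\<dots> = emeasure (distr U \<Sigma> f) X"
          using emeasure_distr[OF f_meas X] spU by simp
        finally show ?thesis .
      qed
    qed
    finally show ?thesis unfolding \<mu>_def .
  qed
  have mem: "\<mu> \<in> invariant_probs S"
    unfolding invariant_probs_def using sets_mu space_mu prob sh_mu inv by (simp add: \<Sigma>_def)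
  define P where "P = f ` {..<N}"
  have Pfin: "finite P" by (simp add: P_def)
  have Psets: "P \<in> sets \<Sigma>"
  proof -
    have "P = (\<Union>i\<in>{..<N}. {f i})" by (auto simp: P_def)
    moreover have "(\<Union>i\<in>{..<N}. {f i}) \<in> sets \<Sigma>"
      using fS by (intro sets.finite_UN) (auto simp: \<Sigma>_def singleton_sets)
    ultimately show ?thesis by simp
  qed
  have AE: "AE x in \<mu>. x \<in> P"
  proof (rule AE_I')
    have "S - P \<in> sets \<Sigma>" using Psets by (metis \<Sigma>_def sets.compl_sets space_SigmaAlg)
    moreover have "emeasure \<mu> (S - P) = 0"
    proof -
      have "f -` (S - P) \<inter> space U = {}" by (auto simp: spU P_def)
      then show ?thesis using emeasure_distr[OF f_meas \<open>S - P \<in> sets \<Sigma>\<close>] by (simp add: \<mu>_def)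
    qed
    ultimately show "S - P \<in> null_sets \<mu>" by (simp add: sets_mu null_sets_def)
    show "{x \<in> space \<mu>. x \<notin> P} \<subseteq> S - P" using space_mu by auto
  qed
  have integ: "(\<integral>\<^sup>+x. ennreal (g x) \<partial>\<mu>) = ennreal ((\<Sum>i<N. max (g (f i)) 0) / real N)"
    for g :: "seq \<Rightarrow> real"
  proof -
    define h where "h x = (\<Sum>q\<in>P. g q * indicator {q} x)" for x
    have h_eq: "x \<in> P \<Longrightarrow> h x = g x" for x
    proof -
      assume "x \<in> P"
      have "h x = (\<Sum>q\<in>P. if x = q then g q else 0)"
        unfolding h_def by (intro sum.cong) (auto simp: indicator_def)
      then show ?thesis using sum.delta'[OF Pfin, of x g] \<open>x \<in> P\<close> by simp
    qed
    have h_meas: "h \<in> borel_measurable \<Sigma>"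
      unfolding h_def
    proof (intro borel_measurable_sum borel_measurable_times borel_measurable_const borel_measurable_indicator)
      fix q assume "q \<in> P"
      then show "{q} \<in> sets \<Sigma>" using fS by (auto simp: P_def \<Sigma>_def singleton_sets)
    qed
    have "(\<integral>\<^sup>+x. ennreal (g x) \<partial>\<mu>) = (\<integral>\<^sup>+x. ennreal (h x) \<partial>\<mu>)"
      by (rule nn_integral_cong_AE) (use AE in \<open>eventually_elim, simp add: h_eq\<close>)
    also have "\<dots> = (\<integral>\<^sup>+i. ennreal (h (f i)) \<partial>U)"
      unfolding \<mu>_def
    proof (rule nn_integral_distr[OF f_meas])
      have "(\<lambda>x. ennreal (h x)) \<in> borel_measurable \<Sigma>" using h_meas by simp
      then show "(\<lambda>x. ennreal (h x)) \<in> borel_measurable (distr U \<Sigma> f)"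
        by (simp only: measurable_cong_sets[OF sets_distr refl])
    qed
    also have "\<dots> = (\<integral>\<^sup>+i. ennreal (g (f i)) \<partial>U)"
      proof (rule nn_integral_cong)
      fix i assume "i \<in> space U"
      then have "f i \<in> P" by (simp add: spU P_def)
      then show "ennreal (h (f i)) = ennreal (g (f i))" by (simp add: h_eq)
    qed
    also have "\<dots> = (\<Sum>i<N. ennreal (1 / real N) * ennreal (g (f i)))"
      unfolding U_def uniform_count_measure_def
      by (subst nn_integral_point_measure_finite) simp_all
    also have "\<dots> = ennreal ((\<Sum>i<N. max (g (f i)) 0) / real N)"
      by (rule ennsum_aux[OF N])
    finally show ?thesis .
  qed
  have "eint \<mu> A = ereal ((\<Sum>i<N. max (A (f i)) 0) / real N) - ereal ((\<Sum>i<N. max (- A (f i)) 0) / real N)"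
    unfolding eint_def integ[of A] integ[of "\<lambda>x. - A x"]
    by (simp add: enn2ereal_ennreal sum_nonneg)
  also have "\<dots> = ereal ((\<Sum>i<N. A (f i)) / real N)"
  proof -
    have "(\<Sum>i<N. max (A (f i)) 0) - (\<Sum>i<N. max (- A (f i)) 0) = (\<Sum>i<N. A (f i))"
      unfolding sum_subtractf[symmetric] by (intro sum.cong) auto
    then have "(\<Sum>i<N. max (A (f i)) 0) / real N - (\<Sum>i<N. max (- A (f i)) 0) / real N = (\<Sum>i<N. A (f i)) / real N"
      by (simp add: diff_divide_distrib[symmetric])
    then show ?thesis by simp
  qed
  finally have "eint \<mu> A = ereal ((\<Sum>i<N. A (f i)) / real N)" .
  moreover have "eint \<mu> A \<le> betaA S A" unfolding betaA_def by (rule SUP_upper[OF mem])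
  ultimately show ?thesis by (simp add: S_def f_def)
qed




lemma sum_split_add: "(\<Sum>i<(n::nat) + k. g i) = (\<Sum>i<n. g i) + (\<Sum>j<k. g (n + j))"
  by (induction k) (simp_all add: add.assoc)

lemma geom_le:
  fixes lam :: real assumes "0 < lam" "lam < 1"
  shows "(\<Sum>i<n. lam ^ (n - i)) \<le> lam / (1 - lam)"
proof (induction n)
  case 0 then show ?case using assms by simp
next
  case (Suc n)
  have "(\<Sum>i<Suc n. lam ^ (Suc n - i)) = (\<Sum>i<Suc n. lam * lam ^ (n - i))"
    by (intro sum.cong) (auto simp: Suc_diff_le)
  also have "\<dots> = lam * (\<Sum>i<Suc n. lam ^ (n - i))" by (simp only: sum_distrib_left)
  also have "\<dots> = lam * ((\<Sum>i<n. lam ^ (n - i)) + 1)" by (simp add: algebra_simps)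
  also have "\<dots> \<le> lam * (lam / (1 - lam) + 1)"
    using Suc assms by (intro mult_left_mono) auto
  also have "\<dots> = lam / (1 - lam)" using assms by (simp add: field_simps)
  finally show ?case .
qed

lemma in_core: "x \<in> SigmaM M \<Longrightarrow> x j \<in> (\<Inter>n. Bset M n)"
proof -
  assume x: "x \<in> SigmaM M"
  have "x j \<in> Bset M n" for n
  proof (induction n arbitrary: j)
    case 0 then show ?case using x by (auto simp: Bset_def SigmaM_def)
  next
    case (Suc n)
    then show ?case using x Suc[of "Suc j"] by (auto simp: Bset_def SigmaM_def)
  qed
  then show ?thesis by blast
qed

lemma dsh_le_agree:
  assumes "0 < lam" "lam < 1" "dsh lam x y \<le> lam ^ k" "i < k"
  shows "x i = y i"
proof (rule ccontr)
  assume ne: "x i \<noteq> y i"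
  then have xy: "x \<noteq> y" by auto
  define j where "j = (LEAST j. x j \<noteq> y j)"
  have "j \<le> i" using ne unfolding j_def by (rule Least_le)
  then have "lam ^ k < lam ^ j" using assms by (intro power_strict_decreasing) auto
  then show False using assms(3) xy by (simp add: dsh_def j_def)
qed

lemma agree_dsh_le:
  assumes "0 < lam" "lam < 1" "\<forall>i<k. x i = y i"
  shows "dsh lam x y \<le> lam ^ k"
proof (cases "x = y")
  case True then show ?thesis using assms by (simp add: dsh_def)
next
  case False
  then obtain i where "x i \<noteq> y i" by auto
  define j where "j = (LEAST j. x j \<noteq> y j)"
  have "x j \<noteq> y j" unfolding j_def by (rule LeastI) fact
  then have "k \<le> j" using assms(3) by (meson not_le)
  then have "lam ^ j \<le> lam ^ k" using assms by (intro power_decreasing) auto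
  then show ?thesis using False by (simp add: dsh_def j_def)
qed

lemma cycle_point:
  assumes L: "L > 0" and cyc: "\<forall>t<L. M (w t) (w (Suc t mod L))"
  shows "(\<lambda>j. w (j mod L)) \<in> SigmaM M" "(shift ^^ L) (\<lambda>j. w (j mod L)) = (\<lambda>j. w (j mod L))"
proof -
  show "(\<lambda>j. w (j mod L)) \<in> SigmaM M"
  proof -
    have "M (w (j mod L)) (w (Suc j mod L))" for j
    proof -
      have e: "Suc j mod L = Suc (j mod L) mod L" by (simp add: mod_Suc_eq)
      have "j mod L < L" using L by simp
      then show ?thesis using cyc e by simp
    qed
    then show ?thesis unfolding SigmaM_def by simp
  qed
  show "(shift ^^ L) (\<lambda>j. w (j mod L)) = (\<lambda>j. w (j mod L))"
    by (simp add: funpow_shift)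
qed

lemma cycle_sum:
  assumes L: "L > 0" and cyc: "\<forall>t<L. M (w t) (w (Suc t mod L))"
    and beta: "betaA (SigmaM M) A = ereal b"
  shows "(\<Sum>i<L. A ((shift ^^ i) (\<lambda>j. w (j mod L)))) \<le> real L * b"
proof -
  have "ereal ((\<Sum>i<L. A ((shift ^^ i) (\<lambda>j. w (j mod L)))) / real L) \<le> ereal b"
    using periodic_measure[OF cycle_point(1)[of L M w, OF L cyc] L cycle_point(2)[of L M w, OF L cyc], of A] beta by simp
  then have "(\<Sum>i<L. A ((shift ^^ i) (\<lambda>j. w (j mod L)))) / real L \<le> b" by simp
  then show ?thesis using L by (simp add: divide_le_eq mult.commute)
qed




lemma key_bound:
  fixes M :: "nat \<Rightarrow> nat \<Rightarrow> bool" and F :: "nat set" and lam b c H :: real and A :: "seq \<Rightarrow> real"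
  assumes lam: "0 < lam" "lam < 1"
    and beta: "betaA (SigmaM M) A = ereal b"
    and cF: "\<forall>x\<in>(\<Union>i\<in>F. cyl (SigmaM M) i). c \<le> A x"
    and Hh: "\<forall>m\<ge>1. \<forall>x\<in>SigmaM M. \<forall>y\<in>SigmaM M. (\<forall>i<m. x i = y i) \<longrightarrow> A x - A y \<le> H * lam ^ m"
    and Hp: "H > 0"
    and K0: "\<forall>i\<in>(\<Inter>n. Bset M n). \<forall>j\<in>(\<Inter>n. Bset M n). \<exists>l::nat\<Rightarrow>nat. l 0 = i \<and> l (Suc K0) = j
                \<and> (\<forall>t\<in>{1..K0}. l t \<in> F) \<and> (\<forall>t\<le>K0. M (l t) (l (Suc t)))"
    and y: "y \<in> SigmaM M" and n: "n \<ge> 1"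
  shows "(\<Sum>i<n. A ((shift ^^ i) y)) \<le> real n * b + real K0 * (b - c) + H * (lam / (1 - lam))"
proof -
  have yM: "M (y j) (y (Suc j))" for j using y by (simp add: SigmaM_def)
  obtain l where l0: "l 0 = y (n - 1)" and lK: "l (Suc K0) = y 0"
    and lF: "\<forall>t\<in>{1..K0}. l t \<in> F" and lM: "\<forall>t\<le>K0. M (l t) (l (Suc t))"
    using K0 in_core[OF y, of "n - 1"] in_core[OF y, of 0] by blast
  define L where "L = n + K0"
  define w where "w t = (if t < n then y t else l (t - n + 1))" for t
  have L: "L > 0" using n by (simp add: L_def)
  have cyc: "\<forall>t<L. M (w t) (w (Suc t mod L))"
  proof (intro allI impI)
    fix t assume t: "t < L"
    show "M (w t) (w (Suc t mod L))"
    proof (cases "Suc t < n")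
      case True
      then have "Suc t mod L = Suc t" by (simp add: L_def)
      then show ?thesis using True yM[of t] by (simp add: w_def)
    next
      case False
      show ?thesis
      proof (cases "t < n")
        case True
        with False have tn: "t = n - 1" by simp
        have wt: "w t = l 0" using True tn l0 by (simp add: w_def)
        have "w (Suc t mod L) = l 1"
        proof (cases "K0 = 0")
          case True
          then have "Suc t mod L = 0" using tn n by (simp add: L_def)
          then show ?thesis using lK True n by (simp add: w_def)
        next
          case False
          then have "Suc t mod L = n" using tn n by (simp add: L_def)
          then show ?thesis by (simp add: w_def)
        qed
        then show ?thesis using wt lM by auto
      next
        case False
        define s where "s = t - n + 1"
        have wt: "w t = l s" using False by (simp add: w_def s_def)
        have sK: "s \<le> K0" using t False by (simp add: s_def L_def)
        have "w (Suc t mod L) = l (Suc s)"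
        proof (cases "Suc t < L")
          case True
          have "Suc t - n = Suc (t - n)" using False by simp
          moreover have "Suc t mod L = Suc t" using True by simp
          ultimately show ?thesis using False by (simp add: w_def s_def)
        next
          case False
          then have "Suc t = L" using t by simp
          then have "Suc t mod L = 0" "s = K0" using \<open>\<not> t < n\<close> by (simp_all add: s_def L_def)
          then show ?thesis using lK n by (simp add: w_def)
        qed
        then show ?thesis using wt lM sK by auto
      qed
    qed
  qed
  define p where "p = (\<lambda>j. w (j mod L))"
  have pS: "p \<in> SigmaM M" unfolding p_def by (rule cycle_point(1)[of L M w, OF L cyc])
  have sumP: "(\<Sum>i<L. A ((shift ^^ i) p)) \<le> real L * b"
    unfolding p_def by (rule cycle_sum[of L M w, OF L cyc beta])
  have tail: "real K0 * c \<le> (\<Sum>j<K0. A ((shift ^^ (n + j)) p))"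
  proof -
    have "c \<le> A ((shift ^^ (n + j)) p)" if j: "j < K0" for j
    proof -
      have "(shift ^^ (n + j)) p \<in> SigmaM M" using pS by (rule funpow_shift_in)
      moreover have "(shift ^^ (n + j)) p 0 = l (Suc j)"
        using j by (simp add: funpow_shift p_def L_def w_def)
      moreover have "l (Suc j) \<in> F" using lF j by auto
      ultimately have "(shift ^^ (n + j)) p \<in> (\<Union>i\<in>F. cyl (SigmaM M) i)"
        by (auto simp: cyl_def)
      then show ?thesis using cF by blast
    qed
    then show ?thesis using sum_bounded_below[of "{..<K0}" c "\<lambda>j. A ((shift ^^ (n + j)) p)"] by simp
  qed
  have comp: "A ((shift ^^ i) y) - A ((shift ^^ i) p) \<le> H * lam ^ (n - i)" if i: "i < n" for i
  proof -
    have "\<forall>m<n - i. (shift ^^ i) y m = (shift ^^ i) p m"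
      using i by (auto simp: funpow_shift p_def L_def w_def)
    moreover have "(shift ^^ i) y \<in> SigmaM M" "(shift ^^ i) p \<in> SigmaM M"
      using y pS by (simp_all add: funpow_shift_in)
    moreover have "n - i \<ge> 1" using i by simp
    ultimately show ?thesis using Hh by blast
  qed
  have "(\<Sum>i<n. A ((shift ^^ i) y)) \<le> (\<Sum>i<n. A ((shift ^^ i) p) + H * lam ^ (n - i))"
    using comp by (intro sum_mono) (simp add: algebra_simps)
  also have "\<dots> = (\<Sum>i<n. A ((shift ^^ i) p)) + H * (\<Sum>i<n. lam ^ (n - i))"
    by (simp add: sum.distrib sum_distrib_left)
  also have "\<dots> \<le> (\<Sum>i<n. A ((shift ^^ i) p)) + H * (lam / (1 - lam))"
    using mult_left_mono[OF geom_le[OF lam, of n], of H] Hp by simp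
  also have "(\<Sum>i<n. A ((shift ^^ i) p)) = (\<Sum>i<L. A ((shift ^^ i) p)) - (\<Sum>j<K0. A ((shift ^^ (n + j)) p))"
    unfolding L_def sum_split_add by simp
  finally show ?thesis using sumP tail by (simp add: L_def algebra_simps)
qed




lemma eint_le:
  assumes "prob_space \<mu>" "\<forall>x\<in>space \<mu>. A x \<le> C"
  shows "eint \<mu> A \<le> ereal (max C 0)"
proof -
  have "(\<integral>\<^sup>+x. ennreal (A x) \<partial>\<mu>) \<le> (\<integral>\<^sup>+x. ennreal (max C 0) \<partial>\<mu>)"
    using assms(2) by (intro nn_integral_mono ennreal_leI) auto
  also have "\<dots> = ennreal (max C 0)"
    using prob_space.emeasure_space_1[OF assms(1)] by simp
  finally have "enn2ereal (\<integral>\<^sup>+x. ennreal (A x) \<partial>\<mu>) \<le> enn2ereal (ennreal (max C 0))"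
    by (simp add: less_eq_ennreal.rep_eq[symmetric])
  moreover have "enn2ereal (ennreal (max C 0)) = ereal (max C 0)"
    by (rule enn2ereal_ennreal) simp
  ultimately have "enn2ereal (\<integral>\<^sup>+x. ennreal (A x) \<partial>\<mu>) \<le> ereal (max C 0)"
    by metis
  then show ?thesis unfolding eint_def
    by (rule ereal_diff_le_mono_left) (rule enn2ereal_nonneg)
qed




theorem mainTheorem4:
  fixes M :: "nat \<Rightarrow> nat \<Rightarrow> bool" and F :: "nat set" and lam :: real
    and A :: "seq \<Rightarrow> real"
  assumes lam: "0 < lam" "lam < 1"
    and prim: "primitive_with M F"
    and bdd_above: "\<exists>C. \<forall>x\<in>SigmaM M. A x \<le> C"
    and holder: "loc_holder lam (SigmaM M) A"
    and inf_F: "\<exists>c. \<forall>x\<in>(\<Union>i\<in>F. cyl (SigmaM M) i). c \<le> A x"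
  shows "\<exists>uA. (\<forall>x\<in>SigmaM M. 0 \<le> uA x)
            \<and> (\<exists>B. \<forall>x\<in>SigmaM M. \<bar>uA x\<bar> \<le> B)
            \<and> loc_holder lam (SigmaM M) uA
            \<and> sub_action lam (SigmaM M) A uA
            \<and> (\<forall>u. (\<forall>x\<in>SigmaM M. 0 \<le> u x) \<and> sub_action lam (SigmaM M) A u
                   \<longrightarrow> (\<forall>x\<in>SigmaM M. uA x \<le> u x))
            \<and> (\<forall>v. ((\<forall>x\<in>SigmaM M. 0 \<le> v x)
                   \<and> (\<exists>B. \<forall>x\<in>SigmaM M. \<bar>v x\<bar> \<le> B)
                   \<and> loc_holder lam (SigmaM M) v
                   \<and> sub_action lam (SigmaM M) A v
                   \<and> (\<forall>u. (\<forall>x\<in>SigmaM M. 0 \<le> u x) \<and> sub_action lam (SigmaM M) A u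
                          \<longrightarrow> (\<forall>x\<in>SigmaM M. v x \<le> u x)))
                 \<longrightarrow> (\<forall>x\<in>SigmaM M. v x = uA x))"
proof (cases "SigmaM M = {}")
  case True
  show ?thesis
    by (rule exI[of _ "\<lambda>x. 0"]) (simp add: True sub_action_def cont_d_def loc_holder_def exI[of _ 1])
next
  case nonempty: False
  define S where "S = SigmaM M"
  obtain C where C: "\<forall>x\<in>S. A x \<le> C" using bdd_above S_def by blast
  obtain c where cF: "\<forall>x\<in>(\<Union>i\<in>F. cyl (SigmaM M) i). c \<le> A x" using inf_F by blast
  obtain H where Hp: "H > 0" and Hd: "\<forall>k\<ge>1. \<forall>x\<in>S. \<forall>y\<in>S. dsh lam x y \<le> lam ^ k \<longrightarrow> A x - A y \<le> H * lam ^ k"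
    using holder unfolding loc_holder_def S_def by blast
  have Hh: "\<forall>m\<ge>1. \<forall>x\<in>SigmaM M. \<forall>y\<in>SigmaM M. (\<forall>i<m. x i = y i) \<longrightarrow> A x - A y \<le> H * lam ^ m"
  proof (intro allI impI ballI)
    fix m x y assume "1 \<le> m" "x \<in> SigmaM M" "y \<in> SigmaM M" "\<forall>i<m. x i = y i"
    then show "A x - A y \<le> H * lam ^ m"
      using Hd agree_dsh_le[OF lam \<open>\<forall>i<m. x i = y i\<close>] unfolding S_def by blast
  qed
  from prim[unfolded primitive_with_def] obtain K0 where K0: "\<forall>i\<in>(\<Inter>n. Bset M n). \<forall>j\<in>(\<Inter>n. Bset M n). \<exists>l::nat\<Rightarrow>nat. l 0 = i \<and> l (Suc K0) = j
                \<and> (\<forall>t\<in>{1..K0}. l t \<in> F) \<and> (\<forall>t\<le>K0. M (l t) (l (Suc t)))"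
    by (rule exE)
  obtain x0 where x0: "x0 \<in> S" using nonempty unfolding S_def by blast
  have beta_up: "betaA S A \<le> ereal (max C 0)"
    unfolding betaA_def
  proof (rule SUP_least)
    fix \<mu> assume "\<mu> \<in> invariant_probs S"
    then have "prob_space \<mu>" "space \<mu> = S" by (auto simp: invariant_probs_def)
    then show "eint \<mu> A \<le> ereal (max C 0)" using C by (intro eint_le) auto
  qed
  have beta_low: "betaA S A \<noteq> - \<infinity>"
  proof -
    obtain l where l0: "l 0 = x0 0" and lK: "l (Suc K0) = x0 0" and lM: "\<forall>t\<le>K0. M (l t) (l (Suc t))"
    proof -
      have "x0 0 \<in> (\<Inter>n. Bset M n)" using in_core[of x0 M 0] x0 S_def by blast
      from K0[rule_format, OF this this] show ?thesis using that by blast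
    qed
    have cyc: "\<forall>t<Suc K0. M (l t) (l (Suc t mod Suc K0))"
    proof (intro allI impI)
      fix t assume t: "t < Suc K0"
      show "M (l t) (l (Suc t mod Suc K0))"
      proof (cases "t = K0")
        case True then show ?thesis using lM l0 lK by auto
      next
        case False then show ?thesis using lM t by auto
      qed
    qed
    have L: "(0::nat) < Suc K0" by simp
    have "ereal ((\<Sum>i<Suc K0. A ((shift ^^ i) (\<lambda>j. l (j mod Suc K0)))) / real (Suc K0)) \<le> betaA S A"
      unfolding S_def by (rule periodic_measure[OF cycle_point(1)[of "Suc K0" M l, OF L cyc] L cycle_point(2)[of "Suc K0" M l, OF L cyc]])
    then show ?thesis by auto
  qed
  define b where "b = real_of_ereal (betaA S A)"
  have beta: "betaA (SigmaM M) A = ereal b"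
  proof -
    have "betaA S A < \<infinity>" by (rule le_less_trans[OF beta_up]) (simp only: less_ereal.simps(4))
    then have "betaA S A \<noteq> \<infinity>" by simp
    then have "\<bar>betaA S A\<bar> \<noteq> \<infinity>" using beta_low by (cases "betaA S A") auto
    then show ?thesis unfolding b_def S_def[symmetric] by (simp add: ereal_real')
  qed
  have key: "(\<Sum>i<n. A ((shift ^^ i) y)) \<le> real n * b + real K0 * (b - c) + H * (lam / (1 - lam))"
    if "y \<in> S" "n \<ge> 1" for y n
    by (rule key_bound[OF lam beta cF Hh Hp K0]) (use that in \<open>simp_all add: S_def\<close>)
  have betaS: "betaA S A = ereal b" using beta by (simp add: S_def)
  define f where "f x = A x - b" for x
  define Sn where "Sn n y = (\<Sum>i<n. f ((shift ^^ i) y))" for n y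
  define T where "T z = {(n, y). y \<in> S \<and> (shift ^^ n) y = z}" for z
  define Kc where "Kc = max 0 (real K0 * (b - c) + H * (lam / (1 - lam)))"
  define u where "u z = (SUP q\<in>T z. Sn (fst q) (snd q))" for z
  define H2 where "H2 = H * (lam / (1 - lam))"
  have H2p: "H2 > 0" using Hp lam by (simp add: H2_def)
  have Sn_bound: "Sn n y \<le> Kc" if y: "y \<in> S" for n y
  proof (cases "n \<ge> 1")
    case True
    have "Sn n y = (\<Sum>i<n. A ((shift ^^ i) y)) - real n * b"
      by (simp add: Sn_def f_def sum_subtractf)
    then show ?thesis using key[OF y True] by (simp add: Kc_def)
  next
    case False
    then have "n = 0" by simp
    then show ?thesis by (simp add: Sn_def Kc_def)
  qed
  have bdd: "bdd_above ((\<lambda>q. Sn (fst q) (snd q)) ` T z)" for z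
    by (rule bdd_aboveI[of _ Kc]) (auto simp: T_def Sn_bound)
  have u_ge: "Sn (fst q) (snd q) \<le> u z" if "q \<in> T z" for q z
    unfolding u_def by (rule cSUP_upper[OF that bdd])
  have Tne: "T z \<noteq> {}" if "z \<in> S" for z
  proof -
    have "(0, z) \<in> T z" using that by (simp add: T_def)
    then show ?thesis by blast
  qed
  have u_le: "u z \<le> B" if "z \<in> S" and "\<And>q. q \<in> T z \<Longrightarrow> Sn (fst q) (snd q) \<le> B" for z B
    unfolding u_def by (rule cSUP_least[OF Tne[OF that(1)]]) (rule that(2))
  have u_nonneg: "0 \<le> u z" if "z \<in> S" for z
  proof -
    have "(0, z) \<in> T z" using that by (simp add: T_def)
    from u_ge[OF this] show ?thesis by (simp add: Sn_def)
  qed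
  have u_bdd: "u z \<le> Kc" if "z \<in> S" for z
    by (rule u_le[OF that]) (auto simp: T_def Sn_bound)
  have sub: "f x + u x \<le> u (shift x)" if x: "x \<in> S" for x
  proof -
    have "u x \<le> u (shift x) - f x"
    proof (rule u_le[OF x])
      fix q assume q: "q \<in> T x"
      obtain n y where qny: "q = (n, y)" and y: "y \<in> S" and yx: "(shift ^^ n) y = x"
        using q by (auto simp: T_def)
      have "(Suc n, y) \<in> T (shift x)" using y yx by (simp add: T_def)
      from u_ge[OF this] have "Sn (Suc n) y \<le> u (shift x)" by simp
      moreover have "Sn (Suc n) y = Sn n y + f x" using yx by (simp add: Sn_def)
      ultimately show "Sn (fst q) (snd q) \<le> u (shift x) - f x" using qny by simp
    qed
    then show ?thesis by simp
  qed
  have hold: "u z \<le> u z' + H2 * lam ^ k"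
    if z: "z \<in> S" and z': "z' \<in> S" and k: "k \<ge> 1" and ag: "\<forall>i<k. z i = z' i" for z z' k
  proof (rule u_le[OF z])
    fix q assume q: "q \<in> T z"
    obtain n y where qny: "q = (n, y)" and y: "y \<in> S" and yz: "(shift ^^ n) y = z"
      using q by (auto simp: T_def)
    have yz': "y (n + j) = z j" for j using fun_cong[OF yz, of j] by (simp add: funpow_shift)
    define y' where "y' j = (if j < n then y j else z' (j - n))" for j
    have y'S: "y' \<in> S"
      unfolding S_def SigmaM_def
    proof (intro CollectI allI)
      fix j
      have yM: "M (y i) (y (Suc i))" for i using y by (simp add: S_def SigmaM_def)
      have z'M: "M (z' i) (z' (Suc i))" for i using z' by (simp add: S_def SigmaM_def)
      show "M (y' j) (y' (Suc j))"
      proof (cases "Suc j < n")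
        case True then show ?thesis using yM[of j] by (simp add: y'_def)
      next
        case False
        show ?thesis
        proof (cases "j < n")
          case True
          with False have jn: "Suc j = n" by simp
          have "z' 0 = z 0" using ag k by auto
          also have "z 0 = y (Suc j)" using yz'[of 0] jn by simp
          finally show ?thesis using True jn yM[of j] by (simp add: y'_def)
        next
          case False
          then have "Suc j - n = Suc (j - n)" by simp
          then show ?thesis using False z'M[of "j - n"] by (simp add: y'_def)
        qed
      qed
    qed
    have "(n, y') \<in> T z'" using y'S by (simp add: T_def funpow_shift y'_def)
    from u_ge[OF this] have y'u: "Sn n y' \<le> u z'" by simp
    have diff: "A ((shift ^^ i) y) - A ((shift ^^ i) y') \<le> H * lam ^ (n - i + k)" if i: "i < n" for i
    proof -
      have "\<forall>m<n - i + k. (shift ^^ i) y m = (shift ^^ i) y' m"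
      proof (intro allI impI)
        fix m assume m: "m < n - i + k"
        show "(shift ^^ i) y m = (shift ^^ i) y' m"
        proof (cases "i + m < n")
          case True then show ?thesis by (simp add: funpow_shift y'_def)
        next
          case False
          then have "y (i + m) = z (i + m - n)" using yz'[of "i + m - n"] by simp
          moreover have "i + m - n < k" using m i False by simp
          ultimately show ?thesis using False ag by (simp add: funpow_shift y'_def)
        qed
      qed
      moreover have "(shift ^^ i) y \<in> SigmaM M" "(shift ^^ i) y' \<in> SigmaM M"
        using y y'S by (simp_all add: S_def funpow_shift_in)
      moreover have "n - i + k \<ge> 1" using k by simp
      ultimately show ?thesis using Hh by blast
    qed
    have "Sn n y - Sn n y' = (\<Sum>i<n. A ((shift ^^ i) y) - A ((shift ^^ i) y'))"
      by (simp add: Sn_def f_def sum_subtractf)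
    also have "\<dots> \<le> (\<Sum>i<n. H * lam ^ (n - i + k))"
      using diff by (intro sum_mono) simp
    also have "\<dots> = H * lam ^ k * (\<Sum>i<n. lam ^ (n - i))"
    proof -
      have "(\<Sum>i<n. H * lam ^ (n - i + k)) = (\<Sum>i<n. H * lam ^ k * lam ^ (n - i))"
        by (intro sum.cong refl) (simp only: power_add mult.commute mult.left_commute)
      then show ?thesis by (simp only: sum_distrib_left)
    qed
    also have "\<dots> \<le> H * lam ^ k * (lam / (1 - lam))"
      using Hp lam by (intro mult_left_mono geom_le) auto
    also have "\<dots> = H2 * lam ^ k" by (simp add: H2_def)
    finally show "Sn (fst q) (snd q) \<le> u z' + H2 * lam ^ k" using qny y'u by simp
  qed
  have cont: "cont_d lam S u"
    unfolding cont_d_def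
  proof (intro ballI allI impI)
    fix x and e :: real assume x: "x \<in> S" and e: "e > 0"
    obtain N0 where N0: "lam ^ N0 < e / H2" using real_arch_pow_inv[of "e / H2" lam] e H2p lam by auto
    show "\<exists>\<delta>>0. \<forall>y\<in>S. dsh lam x y < \<delta> \<longrightarrow> \<bar>u x - u y\<bar> < e"
    proof (intro exI[of _ "lam ^ Suc N0"] conjI ballI impI)
      show "0 < lam ^ Suc N0" using lam by simp
      fix y assume y: "y \<in> S" and d: "dsh lam x y < lam ^ Suc N0"
      have ag: "\<forall>i<Suc N0. x i = y i" using dsh_le_agree[OF lam less_imp_le[OF d]] by blast
      have ag': "\<forall>i<Suc N0. y i = x i" using ag by simp
      have h1: "u x \<le> u y + H2 * lam ^ Suc N0" by (rule hold[OF x y _ ag]) simp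
      have h2: "u y \<le> u x + H2 * lam ^ Suc N0" by (rule hold[OF y x _ ag']) simp
      have "lam ^ Suc N0 \<le> lam ^ N0" using lam by (intro power_decreasing) auto
      then have "H2 * lam ^ Suc N0 < e" using N0 H2p by (simp add: field_simps) (smt (verit) mult_left_mono)
      then show "\<bar>u x - u y\<bar> < e" using h1 h2 by linarith
    qed
  qed
  have lh: "loc_holder lam S u"
    unfolding loc_holder_def
  proof (intro exI[of _ H2] conjI allI impI ballI)
    show "0 < H2" by (rule H2p)
    fix k x y assume k: "1 \<le> k" and x: "x \<in> S" and y: "y \<in> S" and d: "dsh lam x y \<le> lam ^ k"
    have "\<forall>i<k. x i = y i" using dsh_le_agree[OF lam d] by blast
    from hold[OF x y k this] show "u x - u y \<le> H2 * lam ^ k" by simp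
  qed
  have sa: "sub_action lam S A u"
    unfolding sub_action_def
  proof (intro conjI ballI)
    show "cont_d lam S u" by (rule cont)
    fix x assume x: "x \<in> S"
    have "A x + u x - u (shift x) \<le> b" using sub[OF x] by (simp add: f_def)
    then show "ereal (A x + u x - u (shift x)) \<le> betaA S A" by (simp add: betaS)
  qed
  have minimal: "\<forall>x\<in>S. u x \<le> w x" if w0: "\<forall>x\<in>S. 0 \<le> w x" and ws: "sub_action lam S A w" for w
  proof
    have wineq: "f x + w x \<le> w (shift x)" if "x \<in> S" for x
    proof -
      have "ereal (A x + w x - w (shift x)) \<le> ereal b" using ws that by (simp add: sub_action_def betaS)
      then show ?thesis by (simp add: f_def)
    qed
    have chain: "Sn n y + w y \<le> w ((shift ^^ n) y)" if y: "y \<in> S" for n y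
    proof (induction n)
      case 0 then show ?case by (simp add: Sn_def)
    next
      case (Suc n)
      have "(shift ^^ n) y \<in> S" using y by (simp add: S_def funpow_shift_in)
      from wineq[OF this] Suc show ?case by (simp add: Sn_def)
    qed
    fix z assume z: "z \<in> S"
    show "u z \<le> w z"
    proof (rule u_le[OF z])
      fix q assume q: "q \<in> T z"
      obtain n y where qny: "q = (n, y)" and y: "y \<in> S" and yz: "(shift ^^ n) y = z"
        using q by (auto simp: T_def)
      have "Sn n y + w y \<le> w z" using chain[OF y, of n] yz by simp
      moreover have "0 \<le> w y" using w0 y by blast
      ultimately show "Sn (fst q) (snd q) \<le> w z" using qny by simp
    qed
  qed
  show ?thesis unfolding S_def[symmetric]
  proof (intro exI[of _ u] conjI)
    show "\<forall>x\<in>S. 0 \<le> u x" using u_nonneg by blast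
    show "\<exists>B. \<forall>x\<in>S. \<bar>u x\<bar> \<le> B" using u_nonneg u_bdd by (intro exI[of _ Kc]) auto
    show "loc_holder lam S u" by (rule lh)
    show "sub_action lam S A u" by (rule sa)
    show "\<forall>w. (\<forall>x\<in>S. 0 \<le> w x) \<and> sub_action lam S A w \<longrightarrow> (\<forall>x\<in>S. u x \<le> w x)"
      using minimal by blast
    show "\<forall>v. (\<forall>x\<in>S. 0 \<le> v x) \<and> (\<exists>B. \<forall>x\<in>S. \<bar>v x\<bar> \<le> B) \<and> loc_holder lam S v \<and> sub_action lam S A v \<and>
           (\<forall>w. (\<forall>x\<in>S. 0 \<le> w x) \<and> sub_action lam S A w \<longrightarrow> (\<forall>x\<in>S. v x \<le> w x)) \<longrightarrow>
           (\<forall>x\<in>S. v x = u x)"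
    proof (intro allI impI ballI)
      fix v x assume H: "(\<forall>x\<in>S. 0 \<le> v x) \<and> (\<exists>B. \<forall>x\<in>S. \<bar>v x\<bar> \<le> B) \<and> loc_holder lam S v \<and> sub_action lam S A v \<and>
           (\<forall>w. (\<forall>x\<in>S. 0 \<le> w x) \<and> sub_action lam S A w \<longrightarrow> (\<forall>x\<in>S. v x \<le> w x))" and x: "x \<in> S"
      have "v x \<le> u x" using H u_nonneg sa x by blast
      moreover have "u x \<le> v x" using minimal[of v] H x by blast
      ultimately show "v x = u x" by simp
    qed
  qed
qed


end
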